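(* For every real $\nu>1$, the quantity $c_0(\nu):=2\left(\frac{\Gamma(\nu)}{\sqrt{\pi}}\right)^{\frac{2}{2\nu-1}}$ satisfies $$\frac{2\nu}{e}\left(\frac{2}{e}\right)^{\frac{1}{2\nu-1}}\;<\;c_0(\nu)\;<\;\frac{2\nu}{e}.$$
   Context: $\Gamma$ denotes the Euler Gamma function. *)

theory Defs
  imports "HOL-Analysis.Analysis"
begin

end

theory Submission
  imports Defs "HOL-Real_Asymp.Real_Asymp"
begin

lemma lnA:
  fixes t :: real assumes "0 < t" "t < 1"
  shows "2*t < ln (1+t) - ln (1-t)"
proof -
  let ?g = "\<lambda>(u::real). ln (1+u) - ln (1-u) - 2*u"
  have "?g 0 < ?g t"
  proof (rule DERIV_pos_imp_increasing_open[OF assms(1)])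
    fix x :: real assume x: "0 < x" "x < t"
    have "DERIV ?g x :> (1/(1+x) - (-1)/(1-x) - 2)"
      using x assms by (auto intro!: derivative_eq_intros)
    moreover have "1/(1+x) - (-1)/(1-x) - 2 > 0"
    proof -
      have p: "1 + x > 0" "1 - x > 0" using x assms by auto
      have "1/(1+x) - (-1)/(1-x) - 2 = 2*x^2/((1+x)*(1-x))" using p
        by (simp add: divide_simps) (simp add: algebra_simps power2_eq_square)
      also have "\<dots> > 0" using x p by (intro divide_pos_pos mult_pos_pos) auto
      finally show ?thesis .
    qed
    ultimately show "\<exists>y. DERIV ?g x :> y \<and> y > 0" by blast
  next
    show "continuous_on {0..t} ?g" using assms
      by (intro continuous_intros) auto
  qed
  thus ?thesis by simp
qed

lemma lnB0:
  fixes t :: real assumes "0 < t" "t < 1"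
  shows "ln (1+t) - ln (1-t) \<le> (4/3)*t + (1/3)*(1/(1-t) - 1/(1+t))"
proof -
  let ?g = "\<lambda>(u::real). (4/3)*u + (1/3)*(1/(1-u) - 1/(1+u)) - (ln (1+u) - ln (1-u))"
  have "?g 0 \<le> ?g t"
  proof (rule DERIV_nonneg_imp_increasing_open[of 0 t])
    show "0 \<le> t" using assms by simp
  next
    fix x :: real assume x: "0 < x" "x < t"
    have n1: "1 - x \<noteq> 0" "1 + x \<noteq> 0" using x assms by auto
    define p where "p = 1/(1-x)"
    define q where "q = 1/(1+x)"
    have D: "DERIV ?g x :> (4/3 + (1/3)*(p^2 + q^2) - (q + p))"
      using x assms n1 unfolding p_def q_def
      by (auto intro!: derivative_eq_intros simp: power_divide power2_eq_square)
    have "p + q = 2*p*q" unfolding p_def q_def using n1 by (simp add: field_simps)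
    moreover have "p^2+q^2 = (p+q)^2 - 2*p*q" by (simp add: power2_eq_square algebra_simps)
    ultimately have "p^2+q^2 = (p+q)^2 - (p+q)" by linarith
    hence "4/3 + (1/3)*(p^2 + q^2) - (q + p) = 4/3 + (1/3)*((p+q)^2 - (p+q)) - (p+q)" by simp
    also have "\<dots> = (1/3)*(p+q-2)^2" by (simp add: power2_eq_square algebra_simps)
    finally have E: "4/3 + (1/3)*(p^2 + q^2) - (q + p) = (1/3)*(p+q-2)^2" .
    have "(1/3)*(p+q-2)^2 \<ge> (0::real)" by simp
    hence "4/3 + (1/3)*(p^2 + q^2) - (q + p) \<ge> 0" unfolding E .
    with D show "\<exists>y. DERIV ?g x :> y \<and> y \<ge> 0" by blast
  next
    show "continuous_on {0..t} ?g" using assms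
      by (intro continuous_intros) auto
  qed
  thus ?thesis by simp
qed


lemma e1_aux:
  fixes x :: real assumes x: "x > 0"
  shows "(2*x+1)/(2*x) - (2*x+1)/(2*x+2) = (2*x+1)/(2*x*(x+1))"
proof -
  have "(2*x+1)/(2*x) - (2*x+1)/(2*x+2) = ((2*x+1)*(2*x+2) - (2*x+1)*(2*x))/((2*x)*(2*x+2))"
    using x by (simp add: diff_frac_eq)
  also have "(2*x+1)*(2*x+2) - (2*x+1)*(2*x) = 2*(2*x+1)" by (simp add: algebra_simps)
  also have "(2*x)*(2*x+2) = 2*(2*x*(x+1))" by (simp add: algebra_simps)
  also have "2*(2*x+1)/(2*(2*x*(x+1))) = (2*x+1)/(2*x*(x+1))" by (rule mult_divide_mult_cancel_left) simp
  finally show ?thesis .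
qed

lemma dd_alg:
  fixes x :: real assumes x: "x > 0"
  shows "(x + 1/2) * ((4/3)*(1/(2*x+1)) + (1/3)*((2*x+1)/(2*x) - (2*x+1)/(2*x+2))) = 1 + (1/(12*x) - 1/(12*(x+1)))"
proof -
  have n: "2*x+1 \<noteq> 0" "x \<noteq> 0" "x + 1 \<noteq> 0" "2*x+2 \<noteq> 0" using x by auto
  have e2: "1/(12*x) - 1/(12*(x+1)) = 1/(12*x*(x+1))" using n by (simp add: field_simps)
  have e3: "(x + 1/2) = (2*x+1)/2" by simp
  have "(x + 1/2) * ((4/3)*(1/(2*x+1)) + (1/3)*((2*x+1)/(2*x*(x+1)))) = 2/3 + (2*x+1)^2/(12*x*(x+1))"
  proof -
    have f1: "(2*x+1)/2 * ((4/3)*(1/(2*x+1))) = 2/3" using x by (simp add: divide_simps)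
    have f2: "(2*x+1)/2 * ((1/3)*((2*x+1)/(2*x*(x+1)))) = (2*x+1)^2/(12*x*(x+1))"
      using x by (simp add: power2_eq_square)
    show ?thesis unfolding e3 distrib_left[of "(2*x+1)/2"] f1 f2 ..
  qed
  also have "(2*x+1)^2 = 4*x*(x+1) + 1" by (simp add: power2_eq_square algebra_simps)
  also have "2/3 + (4*x*(x+1) + 1)/(12*x*(x+1)) = 1 + 1/(12*x*(x+1))" using x by (simp add: add_divide_distrib)
  finally show ?thesis unfolding e1_aux[OF x] e2 .
qed

definition dd :: "real \<Rightarrow> real" where "dd y = (y + 1/2) * ln (1 + 1/y) - 1"

lemma dd_bounds:
  fixes x :: real assumes x: "x > 0"
  shows "0 < dd x" "dd x \<le> 1/(12*x) - 1/(12*(x+1))"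
proof -
  define t where "t = 1/(2*x+1)"
  have t: "0 < t" "t < 1" using x unfolding t_def by (auto simp: field_simps)
  have a: "1+t = (2*x+2)/(2*x+1)" and b: "1-t = (2*x)/(2*x+1)" using x unfolding t_def by (simp_all add: field_simps)
  have c: "2*x+1 \<noteq> 0" using x by simp
  have "(1+t)/(1-t) = (2*x+2)/(2*x)" unfolding a b using c by simp
  also have "\<dots> = 1 + 1/x" using x by (simp add: field_simps)
  finally have E: "(1+t)/(1-t) = 1 + 1/x" .
  have L: "ln (1 + 1/x) = ln (1+t) - ln (1-t)" unfolding E[symmetric] by (rule ln_divide_pos) (use t in auto)
  have h: "(x + 1/2) * (2*t) = 1" using x unfolding t_def by (simp add: field_simps)
  have xp: "x + 1/2 > 0" using x by simp
  have "(x + 1/2) * (2*t) < (x + 1/2) * ln (1 + 1/x)"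
    unfolding L using lnA[OF t] xp by (intro mult_strict_left_mono) auto
  hence "1 < (x + 1/2) * ln (1 + 1/x)" unfolding h .
  thus "0 < dd x" unfolding dd_def by simp
  have "(x + 1/2) * ln (1 + 1/x) \<le> (x + 1/2) * ((4/3)*t + (1/3)*(1/(1-t) - 1/(1+t)))"
    unfolding L using lnB0[OF t] xp by (intro mult_left_mono) auto
  also have "\<dots> = 1 + (1/(12*x) - 1/(12*(x+1)))"
  proof -
    have f1: "1/(1-t) = (2*x+1)/(2*x)" and f2: "1/(1+t) = (2*x+1)/(2*x+2)" unfolding a b by simp_all
    show ?thesis using dd_alg[OF x] unfolding f1 f2 by (simp add: t_def)
  qed
  finally show "dd x \<le> 1/(12*x) - 1/(12*(x+1))" unfolding dd_def by simp
qed

definition sf :: "real \<Rightarrow> real" where "sf x = ln (Gamma x) - (x - 1/2) * ln x + x"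

lemma pos_not_nonpos_Int: "(x::real) > 0 \<Longrightarrow> x \<notin> \<int>\<^sub>\<le>\<^sub>0"
  using nonpos_Ints_nonpos by fastforce

lemma sf_step:
  fixes x :: real assumes x: "x > 0"
  shows "sf x - sf (x+1) = dd x"
proof -
  have g: "Gamma (x+1) = x * Gamma x" using Gamma_plus1[OF pos_not_nonpos_Int[OF x]] .
  have "ln (Gamma (x+1)) = ln x + ln (Gamma x)" unfolding g using x Gamma_real_pos[OF x] by (rule ln_mult_pos)
  moreover have "ln (1 + 1/x) = ln (x+1) - ln x"
  proof -
    have e: "1 + 1/x = (x+1)/x" using x by (simp add: field_simps)
    have "ln ((x+1)/x) = ln (x+1) - ln x" using x by (intro ln_divide_pos) auto
    thus ?thesis unfolding e .
  qed
  ultimately have G: "ln (Gamma (x+1)) = ln x + ln (Gamma x)" and lx: "ln (1 + 1/x) = ln (x+1) - ln x" by blast+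
  have "sf x - sf (x+1) = ln (Gamma x) - ln (Gamma (x+1)) - (x-1/2)*ln x + (x+1/2)*ln (x+1) - 1"
    unfolding sf_def by (simp add: algebra_simps)
  also have "\<dots> = (x+1/2)*(ln (x+1) - ln x) - 1" unfolding G by (simp add: algebra_simps)
  also have "\<dots> = dd x" unfolding dd_def lx ..
  finally show ?thesis .
qed

lemma sf_tele:
  fixes x :: real assumes x: "x > 0"
  shows "0 \<le> sf x - sf (x + real n) \<and> sf x - sf (x + real n) \<le> 1/(12*x) - 1/(12*(x + real n))"
proof (induction n)
  case 0 thus ?case by simp
next
  case (Suc n)
  have xn: "x + real n > 0" using x by simp
  have e: "x + real (Suc n) = (x + real n) + 1" by simp
  have st: "sf (x + real n) - sf ((x + real n) + 1) = dd (x + real n)"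
    by (rule sf_step[OF xn])
  from dd_bounds[OF xn] Suc.IH st show ?case unfolding e by linarith
qed

lemma sf_tele_lower:
  fixes x :: real assumes x: "x > 0"
  shows "dd x \<le> sf x - sf (x + real (Suc n))"
proof -
  have x1: "x + 1 > 0" using x by simp
  have eq: "x + real (Suc n) = (x+1) + real n" by simp
  show ?thesis unfolding eq using sf_step[OF x] sf_tele[OF x1, of n] by linarith
qed


lemma cr_not_nonpos:
  fixes y :: real assumes y: "y > 0" shows "complex_of_real y \<notin> \<int>\<^sub>\<le>\<^sub>0"
proof
  assume "complex_of_real y \<in> \<int>\<^sub>\<le>\<^sub>0"
  then obtain n where n: "complex_of_real y = of_int n" "n \<le> 0" by (auto simp: nonpos_Ints_def)
  hence "y = of_int n" by (metis of_real_eq_iff of_real_of_int_eq)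
  with n(2) y show False by simp
qed

lemma dup_real:
  fixes x :: real assumes x: "x > 0"
  shows "Gamma x * Gamma (x + 1/2) = exp ((1 - 2*x) * ln 2) * sqrt pi * Gamma (2*x)"
proof -
  have n1: "complex_of_real x \<notin> \<int>\<^sub>\<le>\<^sub>0"
    using cr_not_nonpos[OF x] .
  have n2: "complex_of_real x + 1/2 \<notin> \<int>\<^sub>\<le>\<^sub>0"
  proof
    assume "complex_of_real x + 1/2 \<in> \<int>\<^sub>\<le>\<^sub>0"
    hence "complex_of_real (x + 1/2) \<in> \<int>\<^sub>\<le>\<^sub>0" by simp
    thus False using cr_not_nonpos[of "x + 1/2"] x by simp
  qed
  have "complex_of_real (Gamma x * Gamma (x + 1/2)) = complex_of_real (exp ((1 - 2*x) * ln 2) * sqrt pi * Gamma (2*x))"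
  proof -
    have "complex_of_real (Gamma x * Gamma (x + 1/2)) = Gamma (complex_of_real x) * Gamma (complex_of_real x + 1/2)"
      by (simp add: Gamma_complex_of_real[symmetric])
    also have "\<dots> = exp ((1 - 2*complex_of_real x) * of_real (ln 2)) * of_real (sqrt pi) * Gamma (2*complex_of_real x)"
      by (rule Gamma_legendre_duplication[OF n1 n2])
    also have "\<dots> = complex_of_real (exp ((1 - 2*x) * ln 2) * sqrt pi * Gamma (2*x))"
      by (simp add: Gamma_complex_of_real[symmetric] exp_of_real[symmetric])
    finally show ?thesis .
  qed
  thus ?thesis by (simp only: of_real_eq_iff)
qed


lemma sf_shift:
  fixes x :: real assumes x: "x > 0"
  shows "(\<lambda>n. sf (x + 1 + real n) - sf (1 + real n)) \<longlonglongrightarrow> 0"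
proof -
  have gx: "Gamma x > 0" using x by simp
  define A where "A n = ln (Gamma (x + 1 + real n)) - ln (fact n) - x * ln (real n)" for n
  define E where "E n = x * ln (real n) - (x + real n + 1/2) * ln (x + real n + 1) + (real n + 1/2) * ln (real n + 1) + x" for n
  have GS: "Gamma_series x \<longlonglongrightarrow> Gamma x" by (rule Gamma_series_LIMSEQ)
  hence "(\<lambda>n. ln (Gamma x) - ln (Gamma_series x n)) \<longlonglongrightarrow> ln (Gamma x) - ln (Gamma x)"
    using gx by (intro tendsto_intros) auto
  hence A0: "(\<lambda>n. ln (Gamma x) - ln (Gamma_series x n)) \<longlonglongrightarrow> 0" by simp
  have ev: "eventually (\<lambda>n. ln (Gamma x) - ln (Gamma_series x n) = A n) sequentially"
    using eventually_gt_at_top[of "0::nat"]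
  proof eventually_elim
    case (elim n)
    have p: "pochhammer x (n+1) = Gamma (x + 1 + real n) / Gamma x"
      using pochhammer_Gamma[OF pos_not_nonpos_Int[OF x], of "n+1"] by (simp add: add_ac)
    have g1: "Gamma (x + 1 + real n) > 0" using x by simp
    have "Gamma_series x n = (fact n * exp (x * ln (real n))) * Gamma x / Gamma (x + 1 + real n)"
      unfolding Gamma_series_def p by simp
    also have "\<dots> = exp (ln (fact n) + x * ln (real n) + ln (Gamma x) - ln (Gamma (x + 1 + real n)))"
      using gx g1 by (simp add: exp_add exp_diff)
    finally have "ln (Gamma_series x n) = ln (fact n) + x * ln (real n) + ln (Gamma x) - ln (Gamma (x + 1 + real n))"
      by simp
    thus ?case unfolding A_def by simp
  qed
  have AL: "A \<longlonglongrightarrow> 0" using A0 by (simp only: tendsto_cong[OF ev])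
  have EL: "(\<lambda>n. E n) \<longlonglongrightarrow> 0" unfolding E_def using x by real_asymp
  have "(\<lambda>n. A n + E n) \<longlonglongrightarrow> 0 + 0" by (intro tendsto_add AL EL)
  moreover have "sf (x + 1 + real n) - sf (1 + real n) = A n + E n" for n
  proof -
    have "ln (fact n) = ln (Gamma (1 + real n))" using Gamma_fact[of n, where 'a=real] by simp
    hence "A n = ln (Gamma (x + 1 + real n)) - ln (Gamma (1 + real n)) - x * ln (real n)"
      unfolding A_def by simp
    moreover have "x + 1 + real n - 1/2 = x + real n + 1/2" "1 + real n - 1/2 = real n + 1/2"
      "x + real n + 1 = x + 1 + real n" "real n + 1 = 1 + real n" by simp_all
    ultimately show ?thesis unfolding sf_def E_def by (simp only:)
  qed
  ultimately show ?thesis by simp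
qed

lemma sf_conv:
  obtains L where "\<And>x. x > 0 \<Longrightarrow> (\<lambda>n. sf (x + real n)) \<longlonglongrightarrow> L"
proof -
  define X where "X n = sf (1 + real n)" for n
  have dec: "decseq X" unfolding decseq_def
  proof (intro allI impI)
    fix m n :: nat assume "m \<le> n"
    have "0 \<le> sf (1 + real m) - sf ((1 + real m) + real (n - m))" using sf_tele[of "1 + real m" "n - m"] by simp
    moreover have "(1 + real m) + real (n - m) = 1 + real n" using \<open>m \<le> n\<close> by simp
    ultimately show "X n \<le> X m" unfolding X_def by simp
  qed
  have bnd: "\<forall>i. sf 1 - 1/12 \<le> X i"
  proof
    fix i
    show "sf 1 - 1/12 \<le> X i" using sf_tele[of 1 i] unfolding X_def
      by (smt (verit) divide_nonneg_nonneg of_nat_0_le_iff)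
  qed
  obtain L where XL: "X \<longlonglongrightarrow> L" using decseq_convergent[OF dec bnd] by blast
  have "(\<lambda>n. sf (x + real n)) \<longlonglongrightarrow> L" if x: "x > 0" for x
  proof -
    have "(\<lambda>n. (sf (x + 1 + real n) - sf (1 + real n)) + X n) \<longlonglongrightarrow> 0 + L"
      by (intro tendsto_add sf_shift[OF x] XL)
    hence "(\<lambda>n. sf (x + real (Suc n))) \<longlonglongrightarrow> L" unfolding X_def by (simp add: add_ac)
    thus ?thesis by (rule LIMSEQ_imp_Suc)
  qed
  thus ?thesis using that by blast
qed

lemma sf_limit_value:
  assumes L: "\<And>x. x > 0 \<Longrightarrow> (\<lambda>n. sf (x + real n)) \<longlonglongrightarrow> L"
  shows "L = (ln pi + ln 2) / 2"
proof -
  define z where "z n = real n + 1" for n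
  have z0: "z n > 0" for n unfolding z_def by simp
  have eq: "sf (z n) + sf (z n + 1/2) - sf (2 * z n) =
      ln pi / 2 + ((1 - 2*(real n+1))*ln 2 + (2*(real n+1)-1/2)*ln(2*(real n+1)) - (real n+1-1/2)*ln(real n+1) - (real n+1)*ln(real n+1+1/2) + 1/2)" for n
  proof -
    have d: "Gamma (z n) * Gamma (z n + 1/2) = exp ((1 - 2*z n) * ln 2) * sqrt pi * Gamma (2*z n)"
      by (rule dup_real[OF z0])
    have p1: "Gamma (z n) > 0" "Gamma (z n + 1/2) > 0" "Gamma (2 * z n) > 0" using z0[of n] by simp_all
    have "ln (Gamma (z n)) + ln (Gamma (z n + 1/2)) = (1 - 2*z n) * ln 2 + ln (sqrt pi) + ln (Gamma (2*z n))"
    proof -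
      have "ln (Gamma (z n)) + ln (Gamma (z n + 1/2)) = ln (Gamma (z n) * Gamma (z n + 1/2))"
        using p1 by (simp add: ln_mult_pos)
      also have "\<dots> = ln (exp ((1 - 2*z n) * ln 2) * sqrt pi * Gamma (2*z n))" unfolding d ..
      also have "\<dots> = (1 - 2*z n) * ln 2 + ln (sqrt pi) + ln (Gamma (2*z n))"
        using p1 by (simp add: ln_mult_pos)
      finally show ?thesis .
    qed
    moreover have "ln (sqrt pi) = ln pi / 2" by (simp add: ln_sqrt)
    ultimately show ?thesis unfolding sf_def z_def by (simp add: algebra_simps)
  qed
  have t1: "(\<lambda>n. sf (z n)) \<longlonglongrightarrow> L" using L[of 1] unfolding z_def by (simp add: add_ac)
  have t2: "(\<lambda>n. sf (z n + 1/2)) \<longlonglongrightarrow> L"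
  proof -
    have "(\<lambda>n. sf (3/2 + real n)) \<longlonglongrightarrow> L" using L[of "3/2"] by simp
    moreover have "3/2 + real n = z n + 1/2" for n unfolding z_def by simp
    ultimately show ?thesis by simp
  qed
  have t3: "(\<lambda>n. sf (2 * z n)) \<longlonglongrightarrow> L"
  proof -
    have f: "filterlim (\<lambda>n::nat. 2*n+1) sequentially sequentially" by real_asymp
    have "(\<lambda>n. sf (1 + real (2*n+1))) \<longlonglongrightarrow> L"
      using filterlim_compose[OF L[of 1] f] by simp
    moreover have "1 + real (2*n+1) = 2 * z n" for n unfolding z_def by simp
    ultimately show ?thesis by simp
  qed
  have "(\<lambda>n. sf (z n) + sf (z n + 1/2) - sf (2 * z n)) \<longlonglongrightarrow> L + L - L"
    by (intro tendsto_intros t1 t2 t3)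
  moreover have "(\<lambda>n. sf (z n) + sf (z n + 1/2) - sf (2 * z n)) \<longlonglongrightarrow> ln pi / 2 + ln 2 / 2"
    unfolding eq by (intro tendsto_add tendsto_const) real_asymp
  ultimately have "L + L - L = ln pi / 2 + ln 2 / 2" by (rule LIMSEQ_unique)
  thus ?thesis by simp
qed


lemma ln2_bound: "ln (2::real) < 5/6"
proof -
  have "(17/12::real) \<le> exp (5/12)" using exp_ge_add_one_self[of "5/12::real"] by simp
  hence "(17/12::real)^2 \<le> exp (5/12) ^ 2" by (intro power_mono) auto
  also have "exp (5/12::real) ^ 2 = exp (5/6)" by (simp add: exp_double[symmetric] power2_eq_square flip: exp_add)
  finally have h: "(17/12::real)^2 \<le> exp (5/6)" .
  have "(2::real) < (17/12)^2" by (simp add: power2_eq_square)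
  hence "2 < exp (5/6::real)" using h by linarith
  hence "ln 2 < ln (exp (5/6::real))" by (simp only: ln_less_cancel_iff)
  thus ?thesis by simp
qed

lemma stirling_bounds:
  fixes \<nu> :: real assumes "\<nu> > 1"
  shows "0 < sf \<nu> - (ln pi + ln 2) / 2 \<and> sf \<nu> - (ln pi + ln 2) / 2 < 1/12"
proof -
  obtain L where L: "\<And>x. x > 0 \<Longrightarrow> (\<lambda>n. sf (x + real n)) \<longlonglongrightarrow> L" using sf_conv by blast
  have Lv: "L = (ln pi + ln 2) / 2" by (rule sf_limit_value[OF L])
  have v: "\<nu> > 0" using assms by simp
  have T: "(\<lambda>n. sf \<nu> - sf (\<nu> + real n)) \<longlonglongrightarrow> sf \<nu> - L" by (intro tendsto_intros L v)
  have "(\<lambda>n. sf \<nu> - sf (\<nu> + real (Suc n))) \<longlonglongrightarrow> sf \<nu> - L" using LIMSEQ_Suc[OF T] .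
  hence lo: "dd \<nu> \<le> sf \<nu> - L" by (rule LIMSEQ_le_const) (use sf_tele_lower[OF v] in blast)
  have up: "sf \<nu> - L \<le> 1/(12*\<nu>)"
  proof (rule LIMSEQ_le_const2[OF T], intro exI allI impI)
    fix n :: nat
    have "1/(12*(\<nu> + real n)) \<ge> 0" using v by simp
    thus "sf \<nu> - sf (\<nu> + real n) \<le> 1/(12*\<nu>)" using sf_tele[OF v, of n] by linarith
  qed
  have "1/(12*\<nu>) < 1/12" using assms by (simp add: field_simps)
  thus ?thesis using lo up dd_bounds(1)[OF v] Lv by linarith
qed

theorem mainTheorem8:
  fixes \<nu> :: real
  assumes "\<nu> > 1"
  shows "2 * \<nu> / exp 1 * (2 / exp 1) powr (1 / (2 * \<nu> - 1))
           < 2 * (Gamma \<nu> / sqrt pi) powr (2 / (2 * \<nu> - 1))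
       \<and> 2 * (Gamma \<nu> / sqrt pi) powr (2 / (2 * \<nu> - 1)) < 2 * \<nu> / exp 1"
proof -
  define s where "s = 2 * \<nu> - 1"
  define G where "G = Gamma \<nu>"
  define \<mu> where "\<mu> = sf \<nu> - (ln pi + ln 2) / 2"
  have v: "\<nu> > 0" using assms by simp
  have s: "s > 0" unfolding s_def using assms by simp
  have Gp: "G > 0" unfolding G_def using v by simp
  have mu: "0 < \<mu>" "\<mu> < 1/12" using stirling_bounds[OF assms] unfolding \<mu>_def by auto
  have l2: "ln (2::real) < 5/6" by (rule ln2_bound)
  have lnG: "ln G = \<mu> + (ln pi + ln 2) / 2 + (\<nu> - 1/2) * ln \<nu> - \<nu>"
    unfolding \<mu>_def sf_def G_def by simp
  define a where "a = ln G - ln pi / 2"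
  have la: "ln (G / sqrt pi) = a" unfolding a_def using Gp by (simp add: ln_divide_pos ln_sqrt)
  have a_eq: "a = \<mu> + ln 2 / 2 + (s/2) * ln \<nu> - \<nu>" unfolding a_def lnG s_def by (simp add: field_simps)
  have C: "(G / sqrt pi) powr (2 / s) = exp ((2/s) * a)"
    using Gp by (simp add: powr_def la)
  have N: "\<nu> / exp 1 = exp (ln \<nu> - 1)" using v by (simp add: exp_diff)
  have T: "(2 / exp 1) powr (1/s) = exp ((1/s) * (ln 2 - 1))"
    by (simp add: powr_def ln_div)
  have sa: "(s/2)*(ln \<nu> - 1) = (s/2)*ln \<nu> - \<nu> + 1/2" unfolding s_def by (simp add: field_simps)
  have up: "(2/s) * a < ln \<nu> - 1"
  proof -
    have "a < (s/2) * (ln \<nu> - 1)" using a_eq sa mu l2 by linarith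
    hence "(2/s) * a < (2/s) * ((s/2) * (ln \<nu> - 1))" using s by (intro mult_strict_left_mono) auto
    also have "\<dots> = ln \<nu> - 1" using s by simp
    finally show ?thesis .
  qed
  have low: "(ln \<nu> - 1) + (1/s) * (ln 2 - 1) < (2/s) * a"
  proof -
    have "(s/2) * (ln \<nu> - 1) + (ln 2 - 1)/2 < a" proof -
      have "(ln 2 - 1)/2 = ln 2/2 - (1/2::real)" by (simp add: diff_divide_distrib)
      thus ?thesis using a_eq sa mu by linarith
    qed
    hence "(2/s) * ((s/2) * (ln \<nu> - 1) + (ln 2 - 1)/2) < (2/s) * a" using s by (intro mult_strict_left_mono) auto
    moreover have "(2/s) * ((s/2) * (ln \<nu> - 1) + (ln 2 - 1)/2) = (ln \<nu> - 1) + (1/s) * (ln 2 - 1)"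
      using s by (simp add: field_simps)
    ultimately show ?thesis by simp
  qed
  have "2 * \<nu> / exp 1 * (2 / exp 1) powr (1 / s) = 2 * ((\<nu> / exp 1) * (2 / exp 1) powr (1 / s))" by simp
  also have "\<dots> = 2 * (exp (ln \<nu> - 1) * exp ((1/s) * (ln 2 - 1)))" unfolding N T ..
  also have "\<dots> = 2 * exp ((ln \<nu> - 1) + (1/s) * (ln 2 - 1))" by (simp add: exp_add)
  also have "\<dots> < 2 * (G / sqrt pi) powr (2 / s)" unfolding C using low by simp
  finally have 1: "2 * \<nu> / exp 1 * (2 / exp 1) powr (1 / s) < 2 * (G / sqrt pi) powr (2 / s)" .
  have "2 * (G / sqrt pi) powr (2 / s) < 2 * (\<nu> / exp 1)" unfolding C N using up by simp
  hence 2: "2 * (G / sqrt pi) powr (2 / s) < 2 * \<nu> / exp 1" by simp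
  show ?thesis using 1 2 unfolding s_def G_def by simp
qed


end
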